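(* Let $p\ge4$ and let $\vec r:\mathbb{Z}\to\mathbb{R}^3$ be a discrete centroaffine space curve which is closed with period $p$ and has $\tau_k=0$ for all $k$. Let $S$ be the $p\times p$ real matrix whose $n$-th row ($n=1,\dots,p$) has entry $\kappa_n$ in column $n-1$, entry $-\kappa_n-\bar\kappa_n$ in column $n$, entry $1+\bar\kappa_n$ in column $n+1$, entry $-1$ in column $n+2$ (column indices taken modulo $p$ in $\{1,\dots,p\}$), and zeros elsewhere. Then $\operatorname{rank}S=p-3$.
   Context: A discrete centroaffine space curve is a map $\vec r:\mathbb{Z}\to\mathbb{R}^3$ with $[\vec r_{k-1},\vec r_k,\vec r_{k+1}]\ne0$ for all $k$, where $\vec r_k=\vec r(k)$, $[\cdot,\cdot,\cdot]$ is the $3\times3$ determinant and $\vec t_k=\vec r_{k+1}-\vec r_k$. With $D_k=[\vec r_{k-1},\vec r_k,\vec r_{k+1}]$: $\kappa_k=\frac{[\vec r_k,\vec r_{k+1},\vec r_{k+2}]}{D_k}$, $\bar\kappa_k=\frac{[\vec r_{k+1},\vec t_{k-1},\vec t_{k+1}]}{D_k}$, $\tau_k=\frac{[\vec t_{k-1},\vec t_k,\vec t_{k+1}]}{D_k}$. Closed with period $p$: $\vec r(k+p)=\vec r(k)$ for all $k$, $p$ minimal. *)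

theory Defs
  imports "HOL-Analysis.Analysis" "Jordan_Normal_Form.DL_Rank"
begin

definition det3 :: "real^3 \<Rightarrow> real^3 \<Rightarrow> real^3 \<Rightarrow> real" where
  "det3 a b c = Determinants.det (vector [a, b, c] :: real^3^3)"

definition tvec :: "(int \<Rightarrow> real^3) \<Rightarrow> int \<Rightarrow> real^3" where
  "tvec r k = r (k + 1) - r k"

definition Dk :: "(int \<Rightarrow> real^3) \<Rightarrow> int \<Rightarrow> real" where
  "Dk r k = det3 (r (k - 1)) (r k) (r (k + 1))"

definition centroaffine_curve :: "(int \<Rightarrow> real^3) \<Rightarrow> bool" where
  "centroaffine_curve r \<longleftrightarrow> (\<forall>k. Dk r k \<noteq> 0)"

definition kappa :: "(int \<Rightarrow> real^3) \<Rightarrow> int \<Rightarrow> real" where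
  "kappa r k = det3 (r k) (r (k + 1)) (r (k + 2)) / Dk r k"

definition kappabar :: "(int \<Rightarrow> real^3) \<Rightarrow> int \<Rightarrow> real" where
  "kappabar r k = det3 (r (k + 1)) (tvec r (k - 1)) (tvec r (k + 1)) / Dk r k"

definition tau :: "(int \<Rightarrow> real^3) \<Rightarrow> int \<Rightarrow> real" where
  "tau r k = det3 (tvec r (k - 1)) (tvec r k) (tvec r (k + 1)) / Dk r k"

definition closed_with_period :: "(int \<Rightarrow> real^3) \<Rightarrow> nat \<Rightarrow> bool" where
  "closed_with_period r p \<longleftrightarrow> p > 0 \<and> (\<forall>k. r (k + int p) = r k) \<and>
     (\<forall>q::nat. 0 < q \<and> q < p \<longrightarrow> \<not> (\<forall>k. r (k + int q) = r k))"

text \<open>The p x p matrix S, 0-based: row i corresponds to row n = i+1 of the paper,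
  column j to column j+1; column indices modulo p.\<close>
definition S_mat :: "(int \<Rightarrow> real^3) \<Rightarrow> nat \<Rightarrow> real mat" where
  "S_mat r p = mat p p (\<lambda>(i, j).
     (let n = int i + 1 in
      if j = (i + p - 1) mod p then kappa r n
      else if j = i then - kappa r n - kappabar r n
      else if j = (i + 1) mod p then 1 + kappabar r n
      else if j = (i + 2) mod p then -1
      else 0))"

end

theory Submission
  imports Defs "Jordan_Normal_Form.DL_Rank_Submatrix"
begin

lemma det3_expand: "det3 a b c = vec_nth a 1 * vec_nth b 2 * vec_nth c 3 + vec_nth a 2 * vec_nth b 3 * vec_nth c 1
  + vec_nth a 3 * vec_nth b 1 * vec_nth c 2 - vec_nth a 1 * vec_nth b 3 * vec_nth c 2
  - vec_nth a 2 * vec_nth b 1 * vec_nth c 3 - vec_nth a 3 * vec_nth b 2 * vec_nth c 1"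
  unfolding det3_def det_3 vector_3 ..
lemma cramer: fixes a b c d :: "real^3"
  shows "det3 b c d * vec_nth a i - det3 a c d * vec_nth b i + det3 a b d * vec_nth c i - det3 a b c * vec_nth d i = 0"
proof -
  have "i = 1 \<or> i = 2 \<or> i = 3" using exhaust_3 by blast
  then show ?thesis unfolding det3_expand by (elim disjE; simp add: algebra_simps)
qed



lemma pick_ivl: fixes a b i :: nat shows "i < b - a \<Longrightarrow> pick {a..<b} i = a + i"
proof (induction i)
  case 0
  have "pick {a..<b} 0 = (LEAST x. x \<in> {a..<b})" by (rule pick.simps(1))
  then show ?case using 0 by (auto intro!: Least_equality)
next
  case (Suc i)
  then show ?case unfolding pick.simps by (auto intro!: Least_equality)
qed

lemma sum4:
  fixes x :: "nat \<Rightarrow> real"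
  assumes "c1 < p" "c2 < p" "c3 < p" "c4 < p"
    "c1 \<noteq> c2" "c1 \<noteq> c3" "c1 \<noteq> c4" "c2 \<noteq> c3" "c2 \<noteq> c4" "c3 \<noteq> c4"
  shows "(\<Sum>j\<in>{0..<p}. (if j = c1 then A else if j = c2 then B else if j = c3 then C else if j = c4 then E else 0) * x j)
    = A * x c1 + B * x c2 + C * x c3 + E * x c4"
proof -
  have "(\<Sum>j\<in>{0..<p}. (if j = c1 then A else if j = c2 then B else if j = c3 then C else if j = c4 then E else 0) * x j)
    = (\<Sum>j\<in>{0..<p}. (if j = c1 then A * x c1 else 0) + (if j = c2 then B * x c2 else 0)
        + (if j = c3 then C * x c3 else 0) + (if j = c4 then E * x c4 else 0))"
    by (rule sum.cong) (use assms in auto)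
  also have "\<dots> = A * x c1 + B * x c2 + C * x c3 + E * x c4"
    using assms by (simp add: sum.distrib)
  finally show ?thesis .
qed

lemma shift3:
  fixes g :: "nat \<Rightarrow> real"
  assumes "g 0 = 0" "g 1 = 0" "g 2 = 0" "3 \<le> p"
  shows "(\<Sum>j\<in>{0..<p}. g j) = (\<Sum>k\<in>{0..<p-3}. g (k+3))"
proof -
  have "(\<Sum>j\<in>{0..<p}. g j) = (\<Sum>j\<in>{0..<3}. g j) + (\<Sum>j\<in>{3..<p}. g j)"
    using assms(4) by (simp add: sum.atLeastLessThan_concat)
  also have "(\<Sum>j\<in>{0..<3}. g j) = 0"
  proof -
    have "{0..<3::nat} = {0,1,2}" by auto
    then show ?thesis using assms by simp
  qed
  also have "(\<Sum>j\<in>{3..<p}. g j) = (\<Sum>k\<in>{0..<p-3}. g (k+3))"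
    using sum.shift_bounds_nat_ivl[of g 0 3 "p-3"] assms(4) by simp
  finally show ?thesis by simp
qed

lemma mod_facts:
  assumes "i < (p::nat)" "4 \<le> p"
  shows "(i + p - 1) mod p = (if i = 0 then p - 1 else i - 1)"
    and "(i + 1) mod p = (if i + 1 < p then i + 1 else 0)"
    and "(i + 2) mod p = (if i + 2 < p then i + 2 else i + 2 - p)"
proof -
  show "(i + p - 1) mod p = (if i = 0 then p - 1 else i - 1)"
  proof (cases "i = 0")
    case True then show ?thesis using assms by simp
  next
    case False
    then have "i + p - 1 = (i - 1) + p" by simp
    then have "(i + p - 1) mod p = (i - 1) mod p" by (metis mod_add_self2)
    then show ?thesis using False assms by simp
  qed
  show "(i + 1) mod p = (if i + 1 < p then i + 1 else 0)"
  proof (cases "i + 1 < p")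
    case False
    then have "i + 1 = p" using assms by simp
    then show ?thesis by simp
  qed simp
  show "(i + 2) mod p = (if i + 2 < p then i + 2 else i + 2 - p)"
  proof (cases "i + 2 < p")
    case True then show ?thesis by simp
  next
    case False
    then have "i + 2 = (i + 2 - p) + p" by simp
    then have "(i + 2) mod p = (i + 2 - p) mod p" by (metis mod_add_self2)
    then show ?thesis using False assms by simp
  qed
qed




lemma recur:
  assumes D: "Dk r k \<noteq> 0" and t: "tau r k = 0"
  shows "kappa r k * vec_nth (r (k-1)) i + (- kappa r k - kappabar r k) * vec_nth (r k) i
        + (1 + kappabar r k) * vec_nth (r (k+1)) i + (-1) * vec_nth (r (k+2)) i = 0"
proof -
  define a b c d where "a = r (k-1)" "b = r k" "c = r (k+1)" "d = r (k+2)"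
  have Dd: "Dk r k = det3 a b c" unfolding Dk_def a_b_c_d_def by simp
  have ka: "kappa r k = det3 b c d / det3 a b c" unfolding kappa_def Dd unfolding a_b_c_d_def by simp
  have kb: "kappabar r k = (det3 a c d - det3 b c d) / det3 a b c"
  proof -
    have "det3 (r (k + 1)) (tvec r (k - 1)) (tvec r (k + 1)) = det3 c (b - a) (d - c)"
      unfolding tvec_def a_b_c_d_def by (simp add: add.commute)
    also have "\<dots> = det3 a c d - det3 b c d" unfolding det3_expand by (simp add: algebra_simps)
    finally show ?thesis unfolding kappabar_def Dd by simp
  qed
  have tz: "det3 b c d - det3 a c d + det3 a b d - det3 a b c = 0"
  proof -
    have "det3 (tvec r (k - 1)) (tvec r k) (tvec r (k + 1)) = det3 (b - a) (c - b) (d - c)"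
      unfolding tvec_def a_b_c_d_def by (simp add: add.commute)
    also have "\<dots> = det3 b c d - det3 a c d + det3 a b d - det3 a b c" unfolding det3_expand by (simp add: algebra_simps)
    finally show ?thesis using t D unfolding tau_def Dd by simp
  qed
  have D': "det3 a b c \<noteq> 0" using D Dd by simp
  have cr: "det3 b c d * vec_nth a i - det3 a c d * vec_nth b i + det3 a b d * vec_nth c i - det3 a b c * vec_nth d i = 0" by (rule cramer)
  have "kappa r k * vec_nth a i + (- kappa r k - kappabar r k) * vec_nth b i
        + (1 + kappabar r k) * vec_nth c i + (-1) * vec_nth d i
      = (det3 b c d * vec_nth a i - det3 a c d * vec_nth b i + (det3 a b c + det3 a c d - det3 b c d) * vec_nth c i - det3 a b c * vec_nth d i) / det3 a b c"
    unfolding ka kb using D' by (simp add: field_simps)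
  also have "\<dots> = 0"
  proof -
    have "det3 a b c + det3 a c d - det3 b c d = det3 a b d" using tz by simp
    then show ?thesis using cr by simp
  qed
  finally show ?thesis unfolding a_b_c_d_def .
qed

lemma kernel_comp:
  assumes p4: "4 \<le> p" and cc: "centroaffine_curve r" and per: "\<forall>k. r (k + int p) = r k"
    and tz: "\<forall>k. tau r k = 0" and i: "i < p"
  shows "(\<Sum>j\<in>{0..<p}. S_mat r p $$ (i,j) * vec_nth (r (int j + 1)) c) = 0"
proof -
  define n where "n = int i + 1"
  define c1 c3 c4 where "c1 = (i + p - 1) mod p" "c3 = (i+1) mod p" "c4 = (i+2) mod p"
  note m = mod_facts[OF i p4]
  have "(\<Sum>j\<in>{0..<p}. S_mat r p $$ (i,j) * vec_nth (r (int j + 1)) c)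
     = (\<Sum>j\<in>{0..<p}. (if j = c1 then kappa r n else if j = i then - kappa r n - kappabar r n
          else if j = c3 then 1 + kappabar r n else if j = c4 then -1 else 0) * vec_nth (r (int j + 1)) c)"
    by (rule sum.cong) (auto simp: S_mat_def c1_c3_c4_def n_def i Let_def)
  also have "\<dots> = kappa r n * vec_nth (r (int c1 + 1)) c + (- kappa r n - kappabar r n) * vec_nth (r (int i + 1)) c
      + (1 + kappabar r n) * vec_nth (r (int c3 + 1)) c + (-1) * vec_nth (r (int c4 + 1)) c"
    by (rule sum4) (use m i p4 in \<open>auto simp: c1_c3_c4_def split: if_splits\<close>)
  also have "r (int c1 + 1) = r (n - 1)"
  proof (cases "i = 0")
    case True
    then have "int c1 + 1 = 0 + int p" using m p4 by (simp add: c1_c3_c4_def of_nat_diff)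
    then show ?thesis using per[rule_format, of 0] True by (simp add: n_def)
  next
    case False
    then show ?thesis using m by (simp add: c1_c3_c4_def n_def of_nat_diff)
  qed
  also have "r (int c3 + 1) = r (n + 1)"
  proof (cases "i + 1 < p")
    case False
    then have "n + 1 = 1 + int p" using i by (simp add: n_def)
    then show ?thesis using per[rule_format, of 1] False m by (simp add: c1_c3_c4_def add.commute)
  next
    case True
    then show ?thesis using m by (simp add: c1_c3_c4_def n_def)
  qed
  also have "r (int c4 + 1) = r (n + 2)"
  proof (cases "i + 2 < p")
    case False
    then have e: "n + 2 = (int c4 + 1) + int p" using i m by (simp add: c1_c3_c4_def n_def of_nat_diff)
    then show ?thesis using per by metis
  next
    case True
    then show ?thesis using m by (simp add: c1_c3_c4_def n_def)
  qed
  also have "int i + 1 = n" by (simp add: n_def)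
  also have "kappa r n * vec_nth (r (n - 1)) c + (- kappa r n - kappabar r n) * vec_nth (r n) c
      + (1 + kappabar r n) * vec_nth (r (n + 1)) c + (-1) * vec_nth (r (n + 2)) c = 0"
    by (rule recur) (use cc tz in \<open>auto simp: centroaffine_curve_def\<close>)
  finally show ?thesis .
qed

lemma kernel_lin:
  assumes p4: "4 \<le> p" and cc: "centroaffine_curve r" and per: "\<forall>k. r (k + int p) = r k"
    and tz: "\<forall>k. tau r k = 0" and i: "i < p"
  shows "(\<Sum>j\<in>{0..<p}. S_mat r p $$ (i,j) * (b1 * vec_nth (r (int j + 1)) 1
     + b2 * vec_nth (r (int j + 1)) 2 + b3 * vec_nth (r (int j + 1)) 3)) = 0"
proof -
  have "(\<Sum>j\<in>{0..<p}. S_mat r p $$ (i,j) * (b1 * vec_nth (r (int j + 1)) 1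
     + b2 * vec_nth (r (int j + 1)) 2 + b3 * vec_nth (r (int j + 1)) 3))
   = b1 * (\<Sum>j\<in>{0..<p}. S_mat r p $$ (i,j) * vec_nth (r (int j + 1)) 1)
   + b2 * (\<Sum>j\<in>{0..<p}. S_mat r p $$ (i,j) * vec_nth (r (int j + 1)) 2)
   + b3 * (\<Sum>j\<in>{0..<p}. S_mat r p $$ (i,j) * vec_nth (r (int j + 1)) 3)"
    by (simp add: sum_distrib_left sum.distrib algebra_simps)
  also have "\<dots> = 0" using kernel_comp[OF assms] by simp
  finally show ?thesis .
qed

lemma det3_lin1: "det3 v b c / D = ((vec_nth b 2 * vec_nth c 3 - vec_nth b 3 * vec_nth c 2) / D) * vec_nth v 1
   + ((vec_nth b 3 * vec_nth c 1 - vec_nth b 1 * vec_nth c 3) / D) * vec_nth v 2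
   + ((vec_nth b 1 * vec_nth c 2 - vec_nth b 2 * vec_nth c 1) / D) * vec_nth v 3"
  unfolding det3_expand by (simp add: field_simps) (simp add: algebra_simps add_divide_distrib diff_divide_distrib)




lemma det3_aac: "det3 a a c = 0" unfolding det3_expand by (simp add: algebra_simps)
lemma det3_aba: "det3 a b a = 0" unfolding det3_expand by (simp add: algebra_simps)
lemma det3_abb: "det3 a b b = 0" unfolding det3_expand by (simp add: algebra_simps)
lemma det3_cyc: "det3 b c a = det3 a b c" unfolding det3_expand by (simp add: algebra_simps)

lemma kernel_det:
  assumes p4: "4 \<le> p" and cc: "centroaffine_curve r" and per: "\<forall>k. r (k + int p) = r k"
    and tz: "\<forall>k. tau r k = 0" and i: "i < p"
  shows "(\<Sum>j\<in>{0..<p}. S_mat r p $$ (i,j) * (det3 (r (int j + 1)) b c / D)) = 0"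
  unfolding det3_lin1 by (rule kernel_lin[OF assms])

theorem proposition6p5:
  fixes r :: "int \<Rightarrow> real^3" and p :: nat
  assumes "p \<ge> 4"
    and "centroaffine_curve r"
    and "closed_with_period r p"
    and "\<forall>k. tau r k = 0"
  shows "vec_space.rank p (S_mat r p) = p - 3"
proof -
  have p4: "4 \<le> p" using assms(1) by simp
  note cc = assms(2)
  have per: "\<forall>k. r (k + int p) = r k" using assms(3) by (simp add: closed_with_period_def)
  note tz = assms(4)
  interpret V: vec_space "TYPE(real)" p .
  define S where "S = S_mat r p"
  have Sc: "S \<in> carrier_mat p p" by (simp add: S_def S_mat_def)
  have Sij: "S $$ (i,j) = (let n = int i + 1 in
      if j = (i + p - 1) mod p then kappa r n
      else if j = i then - kappa r n - kappabar r n
      else if j = (i + 1) mod p then 1 + kappabar r n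
      else if j = (i + 2) mod p then -1
      else 0)" if "i < p" "j < p" for i j
    using that by (simp add: S_def S_mat_def)
  define M where "M = submatrix S {0..<p-3} {2..<p-1}"
  have cI: "{i. i < p \<and> i \<in> {0..<p-3}} = {0..<p-3}" by auto
  have cJ: "{j. j < p \<and> j \<in> {2..<p-1}} = {2..<p-1}" by auto
  have cardJ: "card {j. j < p \<and> j \<in> {2..<p-1}} = p - 3" unfolding cJ using p4 by simp
  have dimS: "dim_row S = p" "dim_col S = p" using Sc by auto
  have cardI': "card {i. i < dim_row S \<and> i \<in> {0..<p-3}} = p - 3" unfolding dimS cI by simp
  have cardJ': "card {j. j < dim_col S \<and> j \<in> {2..<p-1}} = p - 3" unfolding dimS cardJ ..
  have Mc: "M \<in> carrier_mat (p-3) (p-3)"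
  proof -
    have "dim_row M = p - 3" "dim_col M = p - 3" unfolding M_def dim_submatrix cardI' cardJ' by simp_all
    then show ?thesis by (intro carrier_matI)
  qed
  have Mij: "M $$ (i,j) = S $$ (i, j+2)" if "i < p-3" "j < p-3" for i j
  proof -
    have "M $$ (i,j) = S $$ (pick {0..<p-3} i, pick {2..<p-1} j)"
      unfolding M_def by (rule submatrix_index) (use that p4 in \<open>simp_all only: cardI' cardJ'\<close>)
    also have "pick {0..<p-3} i = i" using pick_ivl[of i "p-3" 0] that by simp
    also have "pick {2..<p-1} j = j + 2" using pick_ivl[of j "p-1" 2] that p4 by simp
    finally show ?thesis .
  qed
  have Mup: "M $$ (i,j) = 0" if "i < j" "j < p-3" for i j
  proof -
    have ip: "i < p" using that by simp
    have ip3: "i < p - 3" using that by simp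
    note m = mod_facts[OF ip p4]
    have h1: "j + 2 \<noteq> (i + p - 1) mod p" unfolding m(1) using that by auto
    have h3: "j + 2 \<noteq> (i + 1) mod p" unfolding m(2) using that by auto
    have h4: "j + 2 \<noteq> (i + 2) mod p" unfolding m(3) using that by auto
    have h2: "j + 2 \<noteq> i" using that by auto
    have "S $$ (i, j+2) = 0" using that h1 h2 h3 h4 by (subst Sij) (simp_all add: Let_def)
    then show ?thesis using Mij[OF ip3 that(2)] by simp
  qed
  have Mdiag: "M $$ (i,i) = -1" if "i < p-3" for i
  proof -
    have ip: "i < p" using that by simp
    note m = mod_facts[OF ip p4]
    have h1: "i + 2 \<noteq> (i + p - 1) mod p" unfolding m(1) using that by auto
    have h3: "i + 2 \<noteq> (i + 1) mod p" unfolding m(2) using that by auto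
    have h4: "i + 2 = (i + 2) mod p" unfolding m(3) using that by auto
    have h2: "i + 2 \<noteq> i" by auto
    have "S $$ (i, i+2) = -1" using that h1 h2 h3 h4 by (subst Sij) (simp_all add: Let_def)
    then show ?thesis using Mij[OF that that] by simp
  qed
  have "det M = prod_list (diag_mat M)" by (rule det_lower_triangular[OF Mup Mc])
  moreover have "0 \<notin> set (diag_mat M)" using Mc Mdiag by (auto simp: diag_mat_def)
  ultimately have "det M \<noteq> 0" by (simp add: prod_list_zero_iff)
  then have lower: "p - 3 \<le> V.rank S"
    using V.rank_gt_minor[OF Sc, of "{0..<p-3}" "{2..<p-1}"] cardJ unfolding M_def by simp
  define D where "D = det3 (r 1) (r 2) (r 3)"
  have D0: "D \<noteq> 0"
  proof -
    have "Dk r 2 = D" by (simp add: Dk_def D_def)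
    then show ?thesis using cc unfolding centroaffine_curve_def by metis
  qed
  define z0 where "z0 j = det3 (r (int j + 1)) (r 2) (r 3) / D" for j :: nat
  define z1 where "z1 j = det3 (r (int j + 1)) (r 3) (r 1) / D" for j :: nat
  define z2 where "z2 j = det3 (r (int j + 1)) (r 1) (r 2) / D" for j :: nat
  have kz0: "(\<Sum>j\<in>{0..<p}. S $$ (i,j) * z0 j) = 0" if "i < p" for i
    unfolding S_def z0_def by (rule kernel_det[OF p4 cc per tz that])
  have kz1: "(\<Sum>j\<in>{0..<p}. S $$ (i,j) * z1 j) = 0" if "i < p" for i
    unfolding S_def z1_def by (rule kernel_det[OF p4 cc per tz that])
  have kz2: "(\<Sum>j\<in>{0..<p}. S $$ (i,j) * z2 j) = 0" if "i < p" for i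
    unfolding S_def z2_def by (rule kernel_det[OF p4 cc per tz that])
  have zv: "z0 0 = 1" "z0 1 = 0" "z0 2 = 0" "z1 0 = 0" "z1 1 = 1" "z1 2 = 0"
     "z2 0 = 0" "z2 1 = 0" "z2 2 = 1"
    using D0 unfolding z0_def z1_def z2_def D_def
    by (simp_all add: det3_aac det3_aba det3_abb det3_cyc[of "r 2" "r 3" "r 1"] det3_cyc[of "r 3" "r 1" "r 2"])
  define S' where "S' = mat p (p-3) (\<lambda>(i,j). S $$ (i, j+3))"
  have S'c: "S' \<in> carrier_mat p (p-3)" by (simp add: S'_def)
  have Smul: "vec_index (S *\<^sub>v x) i = (\<Sum>j\<in>{0..<p}. S $$ (i,j) * vec_index x j)"
    if "i < p" "x \<in> carrier_vec p" for i x
    using that Sc by (simp add: scalar_prod_def)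
  have S'mul: "vec_index (S' *\<^sub>v x) i = (\<Sum>k\<in>{0..<p-3}. S $$ (i,k+3) * vec_index x k)"
    if "i < p" "x \<in> carrier_vec (p-3)" for i x
    using that S'c by (simp add: scalar_prod_def S'_def)
  have colsp: "V.col_space S = V.col_space S'"
  proof -
    have "(\<exists>x\<in>carrier_vec p. S *\<^sub>v x = y) \<longleftrightarrow> (\<exists>x\<in>carrier_vec (p-3). S' *\<^sub>v x = y)" for y
    proof
      assume "\<exists>x\<in>carrier_vec p. S *\<^sub>v x = y"
      then obtain x where x: "x \<in> carrier_vec p" "S *\<^sub>v x = y" by blast
      define u where "u j = vec_index x j - vec_index x 0 * z0 j - vec_index x 1 * z1 j - vec_index x 2 * z2 j" for j
      define w where "w = vec (p-3) (\<lambda>k. u (k+3))"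
      have "S *\<^sub>v x = S' *\<^sub>v w"
      proof (rule eq_vecI)
        show "dim_vec (S *\<^sub>v x) = dim_vec (S' *\<^sub>v w)" using Sc S'c by simp
        fix i assume "i < dim_vec (S' *\<^sub>v w)"
        then have i: "i < p" using S'c by simp
        have "vec_index (S *\<^sub>v x) i = (\<Sum>j\<in>{0..<p}. S $$ (i,j) * vec_index x j)" by (rule Smul[OF i x(1)])
        also have "\<dots> = (\<Sum>j\<in>{0..<p}. S $$ (i,j) * u j)
            + vec_index x 0 * (\<Sum>j\<in>{0..<p}. S $$ (i,j) * z0 j)
            + vec_index x 1 * (\<Sum>j\<in>{0..<p}. S $$ (i,j) * z1 j)
            + vec_index x 2 * (\<Sum>j\<in>{0..<p}. S $$ (i,j) * z2 j)"
          by (simp add: u_def sum_distrib_left sum.distrib[symmetric] algebra_simps)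
        also have "\<dots> = (\<Sum>j\<in>{0..<p}. S $$ (i,j) * u j)" using kz0[OF i] kz1[OF i] kz2[OF i] by simp
        also have "\<dots> = (\<Sum>k\<in>{0..<p-3}. S $$ (i,k+3) * u (k+3))"
          by (rule shift3) (use zv p4 in \<open>simp_all add: u_def\<close>)
        also have "\<dots> = vec_index (S' *\<^sub>v w) i" using S'mul[OF i] by (simp add: w_def)
        finally show "vec_index (S *\<^sub>v x) i = vec_index (S' *\<^sub>v w) i" .
      qed
      then show "\<exists>x\<in>carrier_vec (p-3). S' *\<^sub>v x = y" using x(2) by (intro bexI[of _ w]) (auto simp: w_def)
    next
      assume "\<exists>x\<in>carrier_vec (p-3). S' *\<^sub>v x = y"
      then obtain v where v: "v \<in> carrier_vec (p-3)" "S' *\<^sub>v v = y" by blast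
      define x where "x = vec p (\<lambda>j. if j < 3 then 0 else vec_index v (j - 3))"
      have "S' *\<^sub>v v = S *\<^sub>v x"
      proof (rule eq_vecI)
        show "dim_vec (S' *\<^sub>v v) = dim_vec (S *\<^sub>v x)" using Sc S'c by simp
        fix i assume "i < dim_vec (S *\<^sub>v x)"
        then have i: "i < p" using Sc by simp
        have "vec_index (S *\<^sub>v x) i = (\<Sum>j\<in>{0..<p}. S $$ (i,j) * vec_index x j)" by (rule Smul[OF i]) (simp add: x_def)
        also have "\<dots> = (\<Sum>k\<in>{0..<p-3}. S $$ (i,k+3) * vec_index x (k+3))"
          by (rule shift3) (use p4 in \<open>simp_all add: x_def\<close>)
        also have "\<dots> = (\<Sum>k\<in>{0..<p-3}. S $$ (i,k+3) * vec_index v k)"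
          by (rule sum.cong) (auto simp: x_def)
        also have "\<dots> = vec_index (S' *\<^sub>v v) i" using S'mul[OF i v(1)] by simp
        finally show "vec_index (S' *\<^sub>v v) i = vec_index (S *\<^sub>v x) i" by simp
      qed
      then show "\<exists>x\<in>carrier_vec p. S *\<^sub>v x = y" using v(2) by (intro bexI[of _ x]) (auto simp: x_def)
    qed
    then show ?thesis unfolding V.col_space_eq[OF Sc] V.col_space_eq[OF S'c] using Sc S'c by simp
  qed
  have "V.span (set (cols S)) = V.span (set (cols S'))" using colsp unfolding V.col_space_def .
  then have "V.rank S = V.rank S'" unfolding V.rank_def by simp
  also have "\<dots> \<le> p - 3" by (rule V.rank_le_nc[OF S'c])
  finally have upper: "V.rank S \<le> p - 3" .
  show ?thesis using lower upper unfolding S_def by simp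
qed


end
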